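(* Let $\mathbf{L}\in\{\mathbf{K}_D,\mathbf{KD}_D,\mathbf{KT}_D\}$. The weakening rules are admissible in $\mathsf{G}(\mathbf{L})$: for all finite multisets $\Gamma,\Delta$ and every formula $\lambda$, if $\mathsf{G}(\mathbf{L})\vdash\Gamma\Rightarrow\Delta$ then $\mathsf{G}(\mathbf{L})\vdash\Gamma\Rightarrow\Delta,\lambda$ and $\mathsf{G}(\mathbf{L})\vdash\lambda,\Gamma\Rightarrow\Delta$.
   Context: Language: fix a finite nonempty set $\mathsf{Agt}$ of agents and a countable set $\mathsf{Prop}$ of propositional variables; $\mathsf{Grp}$ is the set of nonempty subsets of $\mathsf{Agt}$. Formulas: $\alpha::=p\mid\bot\mid\alpha\wedge\alpha\mid\alpha\vee\alpha\mid\alpha\rightarrow\alpha\mid\neg\alpha\mid D_G\alpha$ ($p\in\mathsf{Prop}$, $G\in\mathsf{Grp}$). Outmost-boxed formula: one of the form $D_G\gamma$. Sequent calculi (sequents $\Gamma\Rightarrow\Delta$ are pairs of finite multisets; derivable = root of a finite tree built from initial sequents by rules): $\mathsf{G}(\mathbf{K}_D)$ has initial sequents $\Gamma,p\Rightarrow p,\Delta$ and $\bot,\Gamma\Rightarrow\Delta$; rules $(R\wedge)$ from $\Gamma\Rightarrow\Delta,\alpha_1$ and $\Gamma\Rightarrow\Delta,\alpha_2$ infer $\Gamma\Rightarrow\Delta,\alpha_1\wedge\alpha_2$; $(L\wedge)$ from $\alpha_1,\alpha_2,\Gamma\Rightarrow\Delta$ infer $\alpha_1\wedge\alpha_2,\Gamma\Rightarrow\Delta$;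 $(R\vee)$ from $\Gamma\Rightarrow\Delta,\alpha_1,\alpha_2$ infer $\Gamma\Rightarrow\Delta,\alpha_1\vee\alpha_2$; $(L\vee)$ from $\alpha_1,\Gamma\Rightarrow\Delta$ and $\alpha_2,\Gamma\Rightarrow\Delta$ infer $\alpha_1\vee\alpha_2,\Gamma\Rightarrow\Delta$; $(R\rightarrow)$ from $\alpha_1,\Gamma\Rightarrow\Delta,\alpha_2$ infer $\Gamma\Rightarrow\Delta,\alpha_1\rightarrow\alpha_2$; $(L\rightarrow)$ from $\Gamma\Rightarrow\Delta,\alpha_1$ and $\alpha_2,\Gamma\Rightarrow\Delta$ infer $\alpha_1\rightarrow\alpha_2,\Gamma\Rightarrow\Delta$; $(R\neg)$ from $\alpha,\Gamma\Rightarrow\Delta$ infer $\Gamma\Rightarrow\Delta,\neg\alpha$; $(L\neg)$ from $\Gamma\Rightarrow\Delta,\alpha$ infer $\neg\alpha,\Gamma\Rightarrow\Delta$; $(D_K)$: from $\alpha_1,\dots,\alpha_n\Rightarrow\beta$ ($n\ge0$) infer $\Sigma,D_{G_1}\alpha_1,\dots,D_{G_n}\alpha_n\Rightarrow D_G\beta,\Omega$ where all $G_i\subseteq G$, $\Sigma$ consists only of propositional variables, $\bot$, and $D_H\gamma$ with $H\not\subseteq G$, and $\Omega$ only of propositional variables, $\bot$, outmost-boxed formulas. $\mathsf{G}(\mathbf{KD}_D)$ adds $(D_D)$: from $\Gamma\Rightarrow$ with $\Gamma\neq\emptyset$ infer $\Sigma,D_{\{a\}}\Gamma\Rightarrow\Omega$,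 $\Sigma$ only propositional variables, $\bot$, $D_H\gamma$ with $H\neq\{a\}$; $\Omega$ only propositional variables, $\bot$, outmost-boxed formulas. $\mathsf{G}(\mathbf{KT}_D)$ adds to $\mathsf{G}(\mathbf{K}_D)$ $(D_T)$: from $D_G\alpha,\alpha,\Gamma\Rightarrow\Delta$ infer $D_G\alpha,\Gamma\Rightarrow\Delta$. *)

theory Defs
  imports Main "HOL-Library.Multiset"
begin

text \<open>Agents are the elements of a finite (nonempty, as every HOL type) type 'a;
  groups are nonempty sets of agents; propositional variables are natural numbers.\<close>

datatype 'a fm =
    Pr nat
  | Bot
  | Conj "'a fm" "'a fm"
  | Disj "'a fm" "'a fm"
  | Imp "'a fm" "'a fm"
  | Neg "'a fm"
  | Dbox "'a set" "'a fm"

fun wf :: "'a fm \<Rightarrow> bool" where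
  "wf (Pr p) = True"
| "wf Bot = True"
| "wf (Conj a b) = (wf a \<and> wf b)"
| "wf (Disj a b) = (wf a \<and> wf b)"
| "wf (Imp a b) = (wf a \<and> wf b)"
| "wf (Neg a) = wf a"
| "wf (Dbox G a) = (G \<noteq> {} \<and> wf a)"

definition is_atomic :: "'a fm \<Rightarrow> bool" where
  "is_atomic f \<longleftrightarrow> (\<exists>p. f = Pr p) \<or> f = Bot"

definition is_boxed :: "'a fm \<Rightarrow> bool" where
  "is_boxed f \<longleftrightarrow> (\<exists>H g. f = Dbox H g)"

definition omega_ok :: "'a fm multiset \<Rightarrow> bool" where
  "omega_ok \<Omega> \<longleftrightarrow> (\<forall>f\<in>#\<Omega>. is_atomic f \<or> is_boxed f)"

definition sigmaK_ok :: "'a set \<Rightarrow> 'a fm multiset \<Rightarrow> bool" where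
  "sigmaK_ok G \<Sigma> \<longleftrightarrow> (\<forall>f\<in>#\<Sigma>. is_atomic f \<or> (\<exists>H g. f = Dbox H g \<and> \<not> H \<subseteq> G))"

definition sigmaD_ok :: "'a \<Rightarrow> 'a fm multiset \<Rightarrow> bool" where
  "sigmaD_ok a \<Sigma> \<longleftrightarrow> (\<forall>f\<in>#\<Sigma>. is_atomic f \<or> (\<exists>H g. f = Dbox H g \<and> H \<noteq> {a}))"

datatype logic = LK | LKD | LKT

type_synonym 'a sequent = "'a fm multiset \<times> 'a fm multiset"

inductive derivable :: "logic \<Rightarrow> 'a fm multiset \<Rightarrow> 'a fm multiset \<Rightarrow> bool" for L where
  Ax: "derivable L (add_mset (Pr p) \<Gamma>) (add_mset (Pr p) \<Delta>)"
| BotL: "derivable L (add_mset Bot \<Gamma>) \<Delta>"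
| ConjR: "derivable L \<Gamma> (add_mset a1 \<Delta>) \<Longrightarrow> derivable L \<Gamma> (add_mset a2 \<Delta>)
          \<Longrightarrow> derivable L \<Gamma> (add_mset (Conj a1 a2) \<Delta>)"
| ConjL: "derivable L (add_mset a1 (add_mset a2 \<Gamma>)) \<Delta>
          \<Longrightarrow> derivable L (add_mset (Conj a1 a2) \<Gamma>) \<Delta>"
| DisjR: "derivable L \<Gamma> (add_mset a1 (add_mset a2 \<Delta>))
          \<Longrightarrow> derivable L \<Gamma> (add_mset (Disj a1 a2) \<Delta>)"
| DisjL: "derivable L (add_mset a1 \<Gamma>) \<Delta> \<Longrightarrow> derivable L (add_mset a2 \<Gamma>) \<Delta>
          \<Longrightarrow> derivable L (add_mset (Disj a1 a2) \<Gamma>) \<Delta>"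
| ImpR: "derivable L (add_mset a1 \<Gamma>) (add_mset a2 \<Delta>)
          \<Longrightarrow> derivable L \<Gamma> (add_mset (Imp a1 a2) \<Delta>)"
| ImpL: "derivable L \<Gamma> (add_mset a1 \<Delta>) \<Longrightarrow> derivable L (add_mset a2 \<Gamma>) \<Delta>
          \<Longrightarrow> derivable L (add_mset (Imp a1 a2) \<Gamma>) \<Delta>"
| NegR: "derivable L (add_mset a \<Gamma>) \<Delta> \<Longrightarrow> derivable L \<Gamma> (add_mset (Neg a) \<Delta>)"
| NegL: "derivable L \<Gamma> (add_mset a \<Delta>) \<Longrightarrow> derivable L (add_mset (Neg a) \<Gamma>) \<Delta>"
| DK: "derivable L (mset (map snd xs)) {#b#}
       \<Longrightarrow> (\<forall>x\<in>set xs. fst x \<subseteq> G)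
       \<Longrightarrow> sigmaK_ok G \<Sigma> \<Longrightarrow> omega_ok \<Omega>
       \<Longrightarrow> derivable L (\<Sigma> + mset (map (\<lambda>(H, g). Dbox H g) xs)) (add_mset (Dbox G b) \<Omega>)"
| DD: "L = LKD \<Longrightarrow> derivable L \<Gamma> {#} \<Longrightarrow> \<Gamma> \<noteq> {#}
       \<Longrightarrow> sigmaD_ok a \<Sigma> \<Longrightarrow> omega_ok \<Omega>
       \<Longrightarrow> derivable L (\<Sigma> + image_mset (Dbox {a}) \<Gamma>) \<Omega>"
| DT: "L = LKT \<Longrightarrow> derivable L (add_mset (Dbox G a) (add_mset a \<Gamma>)) \<Delta>
       \<Longrightarrow> derivable L (add_mset (Dbox G a) \<Gamma>) \<Delta>"

end

theory Submission
  imports Defs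
begin

lemma weak_simple:
  assumes "derivable L \<Gamma> \<Delta>"
    and "is_atomic lam \<or> (\<exists>H g. lam = Dbox H g \<and> (\<forall>\<Gamma> \<Delta>. derivable L \<Gamma> \<Delta> \<longrightarrow> derivable L (add_mset g \<Gamma>) \<Delta>))"
  shows "derivable L \<Gamma> (add_mset lam \<Delta>) \<and> derivable L (add_mset lam \<Gamma>) \<Delta>"
  using assms(1)
proof (induction rule: derivable.induct)
  case (Ax p \<Gamma> \<Delta>)
  then show ?case
    by (metis add_mset_commute derivable.Ax)
next
  case (BotL \<Gamma> \<Delta>)
  then show ?case
    by (metis add_mset_commute derivable.BotL)
next
  case (ConjR \<Gamma> a1 \<Delta> a2)
  then show ?case
    by (metis add_mset_commute derivable.ConjR)
next
  case (ConjL a1 a2 \<Gamma> \<Delta>)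
  then show ?case
    by (metis add_mset_commute derivable.ConjL)
next
  case (DisjR \<Gamma> a1 a2 \<Delta>)
  then show ?case
    by (metis add_mset_commute derivable.DisjR)
next
  case (DisjL a1 \<Gamma> \<Delta> a2)
  then show ?case
    by (metis add_mset_commute derivable.DisjL)
next
  case (ImpR a1 \<Gamma> a2 \<Delta>)
  then show ?case
    by (metis add_mset_commute derivable.ImpR)
next
  case (ImpL \<Gamma> a1 \<Delta> a2)
  then show ?case
    by (metis add_mset_commute derivable.ImpL)
next
  case (NegR a \<Gamma> \<Delta>)
  then show ?case
    by (metis add_mset_commute derivable.NegR)
next
  case (NegL \<Gamma> a \<Delta>)
  then show ?case
    by (metis add_mset_commute derivable.NegL)
next
  case (DK xs b G \<Sigma> \<Omega>)
  have om: "omega_ok (add_mset lam \<Omega>)"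
    using assms(2) DK.hyps(4) unfolding omega_ok_def is_boxed_def by auto
  have r: "derivable L (\<Sigma> + mset (map (\<lambda>(H, g). Dbox H g) xs)) (add_mset lam (add_mset (Dbox G b) \<Omega>))"
    using derivable.DK[OF DK.hyps(1) DK.hyps(2) DK.hyps(3) om] by (simp add: add_mset_commute)
  have l: "derivable L (add_mset lam (\<Sigma> + mset (map (\<lambda>(H, g). Dbox H g) xs))) (add_mset (Dbox G b) \<Omega>)"
  proof (cases "is_atomic lam \<or> (\<exists>H g. lam = Dbox H g \<and> \<not> H \<subseteq> G)")
    case True
    then have "sigmaK_ok G (add_mset lam \<Sigma>)"
      using DK.hyps(3) unfolding sigmaK_ok_def by auto
    from derivable.DK[OF DK.hyps(1) DK.hyps(2) this DK.hyps(4)] show ?thesis by simp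
  next
    case False
    then obtain H g where lam: "lam = Dbox H g" "H \<subseteq> G"
      and hg: "\<forall>\<Gamma> \<Delta>. derivable L \<Gamma> \<Delta> \<longrightarrow> derivable L (add_mset g \<Gamma>) \<Delta>"
      using assms(2) by auto
    have p: "derivable L (mset (map snd ((H, g) # xs))) {#b#}"
      using hg DK.hyps(1) by simp
    have "\<forall>x\<in>set ((H, g) # xs). fst x \<subseteq> G" using DK.hyps(2) lam by auto
    from derivable.DK[OF p this DK.hyps(3) DK.hyps(4)] show ?thesis using lam by simp
  qed
  show ?case using r l by blast
next
  case (DD \<Gamma> a \<Sigma> \<Omega>)
  have om: "omega_ok (add_mset lam \<Omega>)"
    using assms(2) DD.hyps(5) unfolding omega_ok_def is_boxed_def by auto
  have r: "derivable L (\<Sigma> + image_mset (Dbox {a}) \<Gamma>) (add_mset lam \<Omega>)"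
    using derivable.DD[OF DD.hyps(1) DD.hyps(2) DD.hyps(3) DD.hyps(4) om] .
  have l: "derivable L (add_mset lam (\<Sigma> + image_mset (Dbox {a}) \<Gamma>)) \<Omega>"
  proof (cases "is_atomic lam \<or> (\<exists>H g. lam = Dbox H g \<and> H \<noteq> {a})")
    case True
    then have "sigmaD_ok a (add_mset lam \<Sigma>)"
      using DD.hyps(4) unfolding sigmaD_ok_def by auto
    from derivable.DD[OF DD.hyps(1) DD.hyps(2) DD.hyps(3) this DD.hyps(5)] show ?thesis by simp
  next
    case False
    then obtain g where lam: "lam = Dbox {a} g"
      and hg: "\<forall>\<Gamma> \<Delta>. derivable L \<Gamma> \<Delta> \<longrightarrow> derivable L (add_mset g \<Gamma>) \<Delta>"
      using assms(2) by auto
    have p: "derivable L (add_mset g \<Gamma>) {#}" using hg DD.hyps(2) by simp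
    from derivable.DD[OF DD.hyps(1) p _ DD.hyps(4) DD.hyps(5)] show ?thesis using lam by simp
  qed
  show ?case using r l by blast
next
  case (DT G a \<Gamma> \<Delta>)
  then show ?case
    by (metis add_mset_commute derivable.DT)
qed

lemma weak_all:
  "derivable L \<Gamma> \<Delta> \<Longrightarrow> derivable L \<Gamma> (add_mset lam \<Delta>) \<and> derivable L (add_mset lam \<Gamma>) \<Delta>"
proof (induction lam arbitrary: \<Gamma> \<Delta>)
  case (Pr x)
  then show ?case using weak_simple[of L \<Gamma> \<Delta> "Pr x"] by (simp add: is_atomic_def)
next
  case Bot
  then show ?case using weak_simple[of L \<Gamma> \<Delta> "Bot"] by (simp add: is_atomic_def)
next
  case (Conj a1 a2)
  then show ?case
    by (metis add_mset_commute derivable.ConjR derivable.ConjL)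
next
  case (Disj a1 a2)
  then show ?case
    by (metis add_mset_commute derivable.DisjR derivable.DisjL)
next
  case (Imp a1 a2)
  then show ?case
    by (metis add_mset_commute derivable.ImpR derivable.ImpL)
next
  case (Neg a)
  then show ?case
    by (metis add_mset_commute derivable.NegR derivable.NegL)
next
  case (Dbox H g)
  then show ?case using weak_simple[of L \<Gamma> \<Delta> "Dbox H g"] by blast
qed

theorem proposition3p8:
  fixes L :: logic and \<Gamma> \<Delta> :: "('a::finite) fm multiset" and lam :: "'a fm"
  assumes "\<forall>f\<in>#\<Gamma> + \<Delta>. wf f" and "wf lam"
    and "derivable L \<Gamma> \<Delta>"
  shows "derivable L \<Gamma> (add_mset lam \<Delta>) \<and> derivable L (add_mset lam \<Gamma>) \<Delta>"
  using weak_all[OF assms(3)] .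

end
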